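(* Let $n$ be a power of $2$ and let $x\in\mathbb{R}^n$ be a Haar-random unit vector (equivalently, a vector with independent $N(0,1)$ coordinates, rescaled to unit norm). Then for any two distinct internal nodes $i,j$ of the binary data loader tree for $x$, the angles $\theta_i$ and $\theta_j$ stored at these nodes are independent random variables.
   Context: The binary data loader for $x\in\mathbb{R}^n$ uses a complete binary tree (binary heap indexing: node $j$ has left child $2j$ and right child $2j+1$) whose leaves correspond to the coordinates of $x$. Each node $j$ stores $r(j)$, the sum of the squares of the coordinates at the leaves of its subtree, and each internal node stores the angle $\theta_j=\arccos\sqrt{r(2j)/r(j)}$, so that $\cos^2\theta_j=r(2j)/r(j)$ and $\sin^2\theta_j=r(2j+1)/r(j)$. These angles are the rotation angles of two-qubit beam splitter gates in a logarithmic-depth circuit that prepares the amplitude encoding of $x$. *)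

theory Defs
  imports "HOL-Probability.Probability"
begin

text \<open>Binary data loader tree for a vector x in R^n (n a power of 2), heap indexing:
  nodes 1 .. 2n-1, node j has children 2j and 2j+1, the leaves are nodes n .. 2n-1,
  leaf l corresponding to coordinate x (l - n).\<close>

definition subtree_leaves :: "nat \<Rightarrow> nat \<Rightarrow> nat set" where
  "subtree_leaves n j = {l \<in> {n..<2*n}. \<exists>m. l div 2^m = j}"

definition loader_r :: "nat \<Rightarrow> (nat \<Rightarrow> real) \<Rightarrow> nat \<Rightarrow> real" where
  "loader_r n x j = (\<Sum>l\<in>subtree_leaves n j. (x (l - n))^2)"

definition loader_theta :: "nat \<Rightarrow> (nat \<Rightarrow> real) \<Rightarrow> nat \<Rightarrow> real" where
  "loader_theta n x j = arccos (sqrt (loader_r n x (2*j) / loader_r n x j))"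

definition gaussian_vec :: "nat \<Rightarrow> (nat \<Rightarrow> real) measure" where
  "gaussian_vec n = PiM {..<n} (\<lambda>_. density lborel std_normal_density)"

definition unit_normalize :: "nat \<Rightarrow> (nat \<Rightarrow> real) \<Rightarrow> (nat \<Rightarrow> real)" where
  "unit_normalize n g = (\<lambda>i. g i / sqrt (\<Sum>l<n. (g l)^2))"

end

theory Submission
  imports Defs
begin

abbreviation "NN \<equiv> density lborel std_normal_density"

interpretation LB: product_sigma_finite "\<lambda>_::nat. lborel :: real measure"
  by standard

lemma prob_NN: "prob_space NN"
  by (rule prob_space_normal_density) simp

interpretation GN: product_sigma_finite "\<lambda>_::nat. NN"
  unfolding product_sigma_finite_def
  using prob_NN by (auto intro: prob_space_imp_sigma_finite)

definition sqn :: "nat set \<Rightarrow> (nat \<Rightarrow> real) \<Rightarrow> real" where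
  "sqn S y = (\<Sum>k\<in>S. (y k)^2)"

lemma sets_NN[simp]: "sets NN = sets borel" by simp

lemma comp_meas_L: "i \<in> I \<Longrightarrow> (\<lambda>x. x i) \<in> borel_measurable (PiM I (\<lambda>_. lborel))"
  by (metis measurable_component_singleton measurable_lborel1)

lemma comp_meas_N: "i \<in> I \<Longrightarrow> (\<lambda>x. x i) \<in> borel_measurable (PiM I (\<lambda>_. NN))"
  using measurable_component_singleton[of i I "\<lambda>_. NN"]
  by (simp cong: measurable_cong_sets)

lemma sqn_meas_L: "S \<subseteq> I \<Longrightarrow> sqn S \<in> borel_measurable (PiM I (\<lambda>_. lborel))"
  unfolding sqn_def by (intro borel_measurable_sum borel_measurable_power comp_meas_L) auto

lemma sqn_meas_N: "S \<subseteq> I \<Longrightarrow> sqn S \<in> borel_measurable (PiM I (\<lambda>_. NN))"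
  unfolding sqn_def by (intro borel_measurable_sum borel_measurable_power comp_meas_N) auto

definition wq :: "nat \<Rightarrow> real \<Rightarrow> real" where
  "wq m q = exp (- q / 2) / sqrt (2 * pi) ^ m"

lemma prod_std: "finite S \<Longrightarrow> (\<Prod>k\<in>S. std_normal_density (y k)) = wq (card S) (sqn S y)"
  unfolding wq_def sqn_def std_normal_density_def
  by (simp add: prod_dividef exp_sum[symmetric] sum_negf sum_divide_distrib)

lemma wq_meas[measurable]: "wq m \<in> borel_measurable borel"
  unfolding wq_def by measurable

lemma gauss_density:
  assumes S: "finite S"
  shows "PiM S (\<lambda>_. NN) = density (PiM S (\<lambda>_. lborel)) (\<lambda>y. ennreal (wq (card S) (sqn S y)))"
proof (rule GN.PiM_eqI[symmetric, OF S])
  show "sets (density (PiM S (\<lambda>_. lborel)) (\<lambda>y. ennreal (wq (card S) (sqn S y)))) = sets (PiM S (\<lambda>_. NN))"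
    by (simp cong: sets_PiM_cong)
  fix A assume A: "\<And>i. i \<in> S \<Longrightarrow> A i \<in> sets NN"
  have Ab: "\<And>i. i \<in> S \<Longrightarrow> A i \<in> sets borel" using A by simp
  have box: "Pi\<^sub>E S A \<in> sets (PiM S (\<lambda>_. lborel))"
    using Ab by (intro sets_PiM_I_finite S) auto
  have "emeasure (density (PiM S (\<lambda>_. lborel)) (\<lambda>y. ennreal (wq (card S) (sqn S y)))) (Pi\<^sub>E S A)
      = (\<integral>\<^sup>+ y. ennreal (wq (card S) (sqn S y)) * indicator (Pi\<^sub>E S A) y \<partial>PiM S (\<lambda>_. lborel))"
    using box S by (subst emeasure_density) (auto intro!: measurable_compose[OF sqn_meas_L measurable_compose[OF wq_meas measurable_ennreal]])
  also have "\<dots> = (\<integral>\<^sup>+ y. (\<Prod>k\<in>S. ennreal (std_normal_density (y k)) * indicator (A k) (y k)) \<partial>PiM S (\<lambda>_. lborel))"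
  proof (intro nn_integral_cong)
    fix y :: "nat \<Rightarrow> real" assume "y \<in> space (PiM S (\<lambda>_. lborel))"
    then have ext: "y \<in> extensional S" by (simp add: space_PiM PiE_def)
    have "indicator (Pi\<^sub>E S A) y = (\<Prod>k\<in>S. indicator (A k) (y k) :: ennreal)"
      using ext S by (auto simp: indicator_def PiE_def Pi_def)
    moreover have "ennreal (wq (card S) (sqn S y)) = (\<Prod>k\<in>S. ennreal (std_normal_density (y k)))"
      using S by (simp add: prod_ennreal prod_std normal_density_nonneg)
    ultimately show "ennreal (wq (card S) (sqn S y)) * indicator (Pi\<^sub>E S A) y =
        (\<Prod>k\<in>S. ennreal (std_normal_density (y k)) * indicator (A k) (y k))"
      by (simp add: prod.distrib)
  qed
  also have "\<dots> = (\<Prod>k\<in>S. \<integral>\<^sup>+ x. ennreal (std_normal_density x) * indicator (A k) x \<partial>lborel)"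
    using Ab by (intro LB.product_nn_integral_prod S) auto
  also have "\<dots> = (\<Prod>k\<in>S. emeasure NN (A k))"
    using Ab by (intro prod.cong refl) (simp add: emeasure_density)
  finally show "emeasure (density (PiM S (\<lambda>_. lborel)) (\<lambda>y. ennreal (wq (card S) (sqn S y)))) (Pi\<^sub>E S A) = (\<Prod>k\<in>S. emeasure NN (A k))" .
qed

definition scl :: "nat set \<Rightarrow> real \<Rightarrow> (nat \<Rightarrow> real) \<Rightarrow> (nat \<Rightarrow> real)" where
  "scl S c y = (\<lambda>k\<in>S. c * y k)"

lemma scl_meas: "scl S c \<in> measurable (PiM S (\<lambda>_. lborel)) (PiM S (\<lambda>_. lborel))"
  unfolding scl_def by (intro measurable_restrict) auto

lemma lborel_scale_pre:
  fixes c :: real assumes c: "c > 0" and A: "A \<in> sets borel"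
  shows "emeasure lborel ((*) c -` A) = ennreal (inverse c) * emeasure lborel A"
proof -
  have "emeasure (distr lborel borel ((*) c)) A = emeasure (density lborel (\<lambda>_. ennreal (inverse \<bar>c\<bar>))) A"
    using lborel_distr_mult[of c] c by simp
  then show ?thesis using A c by (simp add: emeasure_distr emeasure_density_const)
qed

lemma scale_L:
  assumes S: "finite S" and c: "c > 0"
  shows "density (distr (PiM S (\<lambda>_. lborel)) (PiM S (\<lambda>_. lborel)) (scl S c)) (\<lambda>_. ennreal (c ^ card S))
        = PiM S (\<lambda>_. lborel)"
proof (rule LB.PiM_eqI[OF S])
  show "sets (density (distr (PiM S (\<lambda>_. lborel)) (PiM S (\<lambda>_. lborel)) (scl S c)) (\<lambda>_. ennreal (c ^ card S))) = sets (PiM S (\<lambda>_. lborel))"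
    by simp
  fix A assume A: "\<And>i. i \<in> S \<Longrightarrow> A i \<in> sets (lborel :: real measure)"
  have box: "Pi\<^sub>E S A \<in> sets (PiM S (\<lambda>_. lborel))"
    using A by (intro sets_PiM_I_finite S) auto
  have pre: "scl S c -` Pi\<^sub>E S A \<inter> space (PiM S (\<lambda>_. lborel)) = Pi\<^sub>E S (\<lambda>k. (*) c -` A k)"
    by (auto simp: scl_def space_PiM PiE_def Pi_def extensional_def)
  have box2: "\<And>k. k \<in> S \<Longrightarrow> (*) c -` A k \<in> sets lborel"
  proof -
    fix k assume k: "k \<in> S"
    have m: "((*) c) \<in> measurable borel (borel :: real measure)" by measurable
    have "(*) c -` A k \<inter> space borel \<in> sets borel"
      using A[OF k] by (intro measurable_sets[OF m]) simp
    then show "(*) c -` A k \<in> sets lborel" by simp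
  qed
  have "emeasure (density (distr (PiM S (\<lambda>_. lborel)) (PiM S (\<lambda>_. lborel)) (scl S c)) (\<lambda>_. ennreal (c ^ card S))) (Pi\<^sub>E S A)
     = ennreal (c ^ card S) * emeasure (PiM S (\<lambda>_. lborel)) (Pi\<^sub>E S (\<lambda>k. (*) c -` A k))"
    using box by (simp add: emeasure_density_const emeasure_distr scl_meas pre)
  also have "\<dots> = ennreal (c ^ card S) * (\<Prod>k\<in>S. ennreal (inverse c) * emeasure lborel (A k))"
    using box2 A by (simp add: LB.emeasure_PiM S lborel_scale_pre c)
  also have "\<dots> = ennreal (c ^ card S * inverse c ^ card S) * (\<Prod>k\<in>S. emeasure lborel (A k))"
    using c by (simp add: prod.distrib ennreal_power ennreal_mult'' mult.assoc)
  also have "\<dots> = (\<Prod>k\<in>S. emeasure lborel (A k))"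
    using c by (simp add: power_mult_distrib[symmetric])
  finally show "emeasure (density (distr (PiM S (\<lambda>_. lborel)) (PiM S (\<lambda>_. lborel)) (scl S c)) (\<lambda>_. ennreal (c ^ card S))) (Pi\<^sub>E S A) = (\<Prod>k\<in>S. emeasure lborel (A k))" .
qed

lemma scale_L_emeasure:
  assumes S: "finite S" and c: "c > 0" and X: "X \<in> sets (PiM S (\<lambda>_. lborel))"
  shows "emeasure (PiM S (\<lambda>_. lborel)) X = ennreal (c ^ card S) * emeasure (PiM S (\<lambda>_. lborel)) (scl S c -` X \<inter> space (PiM S (\<lambda>_. lborel)))"
proof -
  have "emeasure (PiM S (\<lambda>_. lborel)) X = emeasure (density (distr (PiM S (\<lambda>_. lborel)) (PiM S (\<lambda>_. lborel)) (scl S c)) (\<lambda>_. ennreal (c ^ card S))) X"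
    using scale_L[OF S c] by simp
  also have "\<dots> = ennreal (c ^ card S) * emeasure (PiM S (\<lambda>_. lborel)) (scl S c -` X \<inter> space (PiM S (\<lambda>_. lborel)))"
    using X by (simp add: emeasure_density_const emeasure_distr scl_meas)
  finally show ?thesis .
qed

lemma sqn_nonneg: "sqn S y \<ge> 0" unfolding sqn_def by (simp add: sum_nonneg)

lemma sqn_scl: "sqn S (scl S c y) = c^2 * sqn S y"
  unfolding sqn_def scl_def by (simp add: sum_distrib_left power_mult_distrib)

lemma sqn_lt_sets: "S \<subseteq> I \<Longrightarrow> {y \<in> space (PiM I (\<lambda>_. lborel::real measure)). sqn S y < t} \<in> sets (PiM I (\<lambda>_. lborel))"
proof -
  assume SI: "S \<subseteq> I"
  have eq: "{y \<in> space (PiM I (\<lambda>_. lborel::real measure)). sqn S y < t} = sqn S -` {..<t} \<inter> space (PiM I (\<lambda>_. lborel::real measure))"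
    by blast
  have "sqn S -` {..<t} \<inter> space (PiM I (\<lambda>_. lborel::real measure)) \<in> sets (PiM I (\<lambda>_. lborel))"
    by (rule measurable_sets[OF sqn_meas_L[OF SI]]) simp
  then show ?thesis unfolding eq .
qed

lemma cone_scale:
  assumes S: "finite S" and t: "t > 0" and E: "E \<in> sets (PiM S (\<lambda>_. lborel))"
    and cone: "\<And>y c. y \<in> space (PiM S (\<lambda>_. lborel)) \<Longrightarrow> c > 0 \<Longrightarrow> scl S c y \<in> E \<longleftrightarrow> y \<in> E"
  shows "emeasure (PiM S (\<lambda>_. lborel)) (E \<inter> {y \<in> space (PiM S (\<lambda>_. lborel)). sqn S y < t})
    = ennreal (sqrt t ^ card S) * emeasure (PiM S (\<lambda>_. lborel)) (E \<inter> {y \<in> space (PiM S (\<lambda>_. lborel)). sqn S y < 1})"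
proof -
  let ?L = "PiM S (\<lambda>_. lborel :: real measure)"
  have c: "sqrt t > 0" using t by simp
  have X: "E \<inter> {y \<in> space ?L. sqn S y < t} \<in> sets ?L"
    using E sqn_lt_sets[of S S t] by (intro sets.Int) auto
  have pre: "scl S (sqrt t) -` (E \<inter> {y \<in> space ?L. sqn S y < t}) \<inter> space ?L = E \<inter> {y \<in> space ?L. sqn S y < 1}"
  proof -
    have sp: "y \<in> space ?L \<Longrightarrow> scl S (sqrt t) y \<in> space ?L" for y
      using measurable_space[OF scl_meas] by blast
    have "y \<in> space ?L \<Longrightarrow> (sqn S (scl S (sqrt t) y) < t) = (sqn S y < 1)" for y
      using t by (simp add: sqn_scl)
    then show ?thesis using cone[OF _ c] sp by auto
  qed
  show ?thesis
    using scale_L_emeasure[OF S c X] by (simp only: pre)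
qed

lemma lt1_finite:
  assumes S: "finite S"
  shows "emeasure (PiM S (\<lambda>_. lborel)) {y \<in> space (PiM S (\<lambda>_. lborel)). sqn S y < 1} < \<infinity>"
proof -
  let ?L = "PiM S (\<lambda>_. lborel :: real measure)"
  have sub: "{y \<in> space ?L. sqn S y < 1} \<subseteq> Pi\<^sub>E S (\<lambda>_. {-1..1})"
  proof
    fix y assume y: "y \<in> {y \<in> space ?L. sqn S y < 1}"
    have sq: "\<And>k. k \<in> S \<Longrightarrow> (y k)^2 \<le> sqn S y"
      unfolding sqn_def using S by (intro member_le_sum) auto
    have "\<And>k. k \<in> S \<Longrightarrow> \<bar>y k\<bar> \<le> 1"
    proof -
      fix k assume k: "k \<in> S"
      have "(y k)^2 \<le> 1" using sq[OF k] y by simp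
      then show "\<bar>y k\<bar> \<le> 1" by (simp add: abs_square_le_1)
    qed
    then show "y \<in> Pi\<^sub>E S (\<lambda>_. {-1..1})" using y by (auto simp: space_PiM PiE_def Pi_def abs_le_iff)
  qed
  have "emeasure ?L {y \<in> space ?L. sqn S y < 1} \<le> emeasure ?L (Pi\<^sub>E S (\<lambda>_. {-1..1}))"
    using sub S by (intro emeasure_mono) (auto intro!: sets_PiM_I_finite)
  also have "\<dots> = (\<Prod>k\<in>S. emeasure lborel {-1..1::real})"
    by (simp add: LB.emeasure_PiM S)
  also have "\<dots> < \<infinity>" by (simp add: power_less_top_ennreal)
  finally show ?thesis .
qed

lemma lt1_pos:
  assumes S: "finite S"
  shows "emeasure (PiM S (\<lambda>_. lborel)) {y \<in> space (PiM S (\<lambda>_. lborel)). sqn S y < 1} \<noteq> 0"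
proof -
  let ?L = "PiM S (\<lambda>_. lborel :: real measure)"
  define r :: real where "r = 1 / (2 * (card S + 1))"
  have r: "r > 0" "r \<le> 1/2" unfolding r_def by (auto simp: field_simps)
  have sub: "Pi\<^sub>E S (\<lambda>_. {-r..r}) \<subseteq> {y \<in> space ?L. sqn S y < 1}"
  proof
    fix y assume y: "y \<in> Pi\<^sub>E S (\<lambda>_. {-r..r})"
    have "\<And>k. k \<in> S \<Longrightarrow> (y k)^2 \<le> r^2"
    proof -
      fix k assume k: "k \<in> S"
      have "y k \<in> {-r..r}" using y k by (auto simp: PiE_def Pi_def)
      then have "\<bar>y k\<bar> \<le> r" by (auto simp: abs_le_iff)
      then have "\<bar>y k\<bar>^2 \<le> r^2" by (rule power_mono) simp
      then show "(y k)^2 \<le> r^2" by simp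
    qed
    then have "sqn S y \<le> card S * r^2" unfolding sqn_def using sum_bounded_above[of S "\<lambda>k. (y k)^2" "r^2"] by simp
    also have "card S * r^2 < 1"
    proof -
      have "r^2 \<le> r" using r by (simp add: power2_eq_square mult_left_le)
      then have "card S * r^2 \<le> card S * r" by (simp add: mult_left_mono)
      also have "card S * r < 1" unfolding r_def by (simp add: field_simps)
      finally show ?thesis .
    qed
    finally show "y \<in> {y \<in> space ?L. sqn S y < 1}" using y by (auto simp: space_PiM PiE_def)
  qed
  have A: "0 < (\<Prod>k\<in>S. emeasure lborel {-r..r})"
    using r by (simp add: ennreal_power)
  have B: "(\<Prod>k\<in>S. emeasure lborel {-r..r}) = emeasure ?L (Pi\<^sub>E S (\<lambda>_. {-r..r}))"
    by (simp add: LB.emeasure_PiM S)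
  have C: "emeasure ?L (Pi\<^sub>E S (\<lambda>_. {-r..r})) \<le> emeasure ?L {y \<in> space ?L. sqn S y < 1}"
    by (rule emeasure_mono[OF sub]) (rule sqn_lt_sets, simp)
  have "0 < emeasure ?L {y \<in> space ?L. sqn S y < 1}"
    using A B C by (metis order_less_le_trans)
  then show ?thesis by (metis order_less_irrefl)
qed

lemma sqn_L_dens: "sqn S \<in> borel_measurable (density (PiM S (\<lambda>_. lborel :: real measure)) f)"
  by (subst measurable_cong_sets[OF sets_density refl]) (rule sqn_meas_L, simp)

lemma mu_lessThan:
  assumes S: "finite S" and E: "E \<in> sets (PiM S (\<lambda>_. lborel))"
    and cone: "\<And>y c. y \<in> space (PiM S (\<lambda>_. lborel)) \<Longrightarrow> c > 0 \<Longrightarrow> scl S c y \<in> E \<longleftrightarrow> y \<in> E"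
  shows "emeasure (distr (density (PiM S (\<lambda>_. lborel :: real measure)) (indicator E)) borel (sqn S)) {..<t}
    = (if 0 < t then ennreal (sqrt t ^ card S) * emeasure (PiM S (\<lambda>_. lborel)) (E \<inter> {y \<in> space (PiM S (\<lambda>_. lborel)). sqn S y < 1}) else 0)"
proof -
  let ?L = "PiM S (\<lambda>_. lborel :: real measure)"
  have eq: "sqn S -` {..<t} \<inter> space (density ?L (indicator E)) = {y \<in> space ?L. sqn S y < t}"
    by auto
  have "emeasure (distr (density ?L (indicator E)) borel (sqn S)) {..<t}
      = emeasure (density ?L (indicator E)) (sqn S -` {..<t} \<inter> space (density ?L (indicator E)))"
    by (rule emeasure_distr[OF sqn_L_dens]) simp
  also have "\<dots> = emeasure ?L (E \<inter> {y \<in> space ?L. sqn S y < t})"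
    unfolding eq by (rule emeasure_restricted[OF E sqn_lt_sets]) simp
  also have "\<dots> = (if 0 < t then ennreal (sqrt t ^ card S) * emeasure ?L (E \<inter> {y \<in> space ?L. sqn S y < 1}) else 0)"
  proof (cases "0 < t")
    case True
    then show ?thesis using cone_scale[OF S True E cone] by simp
  next
    case False
    then have "{y \<in> space ?L. sqn S y < t} = {}" using sqn_nonneg[of S] by (auto simp: not_less) (meson not_le order_trans)
    then have e: "E \<inter> {y \<in> space ?L. sqn S y < t} = {}" by blast
    show ?thesis using False by (simp only: e emeasure_empty if_False)
  qed
  finally show ?thesis .
qed

lemma gauss_event:
  assumes S: "finite S" and E: "E \<in> sets (PiM S (\<lambda>_. lborel))" and D: "D \<in> sets borel"
  shows "emeasure (PiM S (\<lambda>_. NN)) (E \<inter> {y \<in> space (PiM S (\<lambda>_. NN)). sqn S y \<in> D})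
    = (\<integral>\<^sup>+ q. ennreal (wq (card S) q) * indicator D q \<partial>distr (density (PiM S (\<lambda>_. lborel :: real measure)) (indicator E)) borel (sqn S))"
proof -
  let ?L = "PiM S (\<lambda>_. lborel :: real measure)"
  let ?\<psi> = "\<lambda>y. ennreal (wq (card S) (sqn S y))"
  have sp: "space (PiM S (\<lambda>_. NN)) = space ?L" by (simp add: space_PiM)
  have psi: "?\<psi> \<in> borel_measurable ?L"
    by (intro measurable_compose[OF sqn_meas_L measurable_compose[OF wq_meas]] measurable_ennreal) simp
  have Dset: "{y \<in> space ?L. sqn S y \<in> D} \<in> sets ?L"
  proof -
    have "{y \<in> space ?L. sqn S y \<in> D} = sqn S -` D \<inter> space ?L" by blast
    also have "\<dots> \<in> sets ?L" by (rule measurable_sets[OF sqn_meas_L D]) simp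
    finally show ?thesis .
  qed
  have X: "E \<inter> {y \<in> space ?L. sqn S y \<in> D} \<in> sets ?L" using E Dset by (rule sets.Int)
  have "emeasure (PiM S (\<lambda>_. NN)) (E \<inter> {y \<in> space (PiM S (\<lambda>_. NN)). sqn S y \<in> D})
     = emeasure (density ?L ?\<psi>) (E \<inter> {y \<in> space ?L. sqn S y \<in> D})"
    by (simp only: gauss_density[OF S] space_density)
  also have "\<dots> = (\<integral>\<^sup>+ y. ?\<psi> y * indicator (E \<inter> {y \<in> space ?L. sqn S y \<in> D}) y \<partial>?L)"
    by (rule emeasure_density[OF psi X])
  also have "\<dots> = (\<integral>\<^sup>+ y. indicator E y * (ennreal (wq (card S) (sqn S y)) * indicator D (sqn S y)) \<partial>?L)"
    by (intro nn_integral_cong) (auto simp: indicator_def)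
  also have "\<dots> = (\<integral>\<^sup>+ y. ennreal (wq (card S) (sqn S y)) * indicator D (sqn S y) \<partial>density ?L (indicator E))"
  proof (rule nn_integral_density[symmetric])
    show "indicator E \<in> borel_measurable ?L" using E by simp
    show "(\<lambda>y. ennreal (wq (card S) (sqn S y)) * indicator D (sqn S y)) \<in> borel_measurable ?L"
      using psi D by (intro borel_measurable_times_ennreal measurable_compose[OF sqn_meas_L]) auto
  qed
  also have "\<dots> = (\<integral>\<^sup>+ q. ennreal (wq (card S) q) * indicator D q \<partial>distr (density ?L (indicator E)) borel (sqn S))"
    by (rule nn_integral_distr[symmetric, OF sqn_L_dens]) (use D in simp)
  finally show ?thesis .
qed

lemma Int_stable_lessThan: "Int_stable (range (lessThan :: real \<Rightarrow> real set))"
  unfolding Int_stable_def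
proof safe
  fix a b :: real
  have "{..<a} \<inter> {..<b} = {..<min a b}" by auto
  then show "{..<a} \<inter> {..<b} \<in> range lessThan" by blast
qed

lemma mu_eq:
  assumes S: "finite S" and E: "E \<in> sets (PiM S (\<lambda>_. lborel))"
    and cone: "\<And>y c. y \<in> space (PiM S (\<lambda>_. lborel)) \<Longrightarrow> c > 0 \<Longrightarrow> scl S c y \<in> E \<longleftrightarrow> y \<in> E"
  defines "L \<equiv> PiM S (\<lambda>_. lborel :: real measure)"
  defines "aE \<equiv> emeasure L (E \<inter> {y \<in> space L. sqn S y < 1})"
  defines "aU \<equiv> emeasure L (space L \<inter> {y \<in> space L. sqn S y < 1})"
  shows "density (distr (density L (indicator E)) borel (sqn S)) (\<lambda>_. aU)
       = density (distr (density L (indicator (space L))) borel (sqn S)) (\<lambda>_. aE)"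
proof -
  have U: "space L \<in> sets L" by simp
  have coneU: "\<And>y c. y \<in> space L \<Longrightarrow> c > 0 \<Longrightarrow> scl S c y \<in> space L \<longleftrightarrow> y \<in> space L"
    using measurable_space[OF scl_meas] unfolding L_def by blast
  have Ueq: "space L \<inter> {y \<in> space L. sqn S y < 1} = {y \<in> space L. sqn S y < 1}" by blast
  have aUfin: "aU < \<infinity>" unfolding aU_def Ueq unfolding L_def by (rule lt1_finite[OF S])
  have aEfin: "aE < \<infinity>"
  proof -
    have "aE \<le> aU" unfolding aE_def aU_def Ueq
      by (rule emeasure_mono) (blast, unfold L_def, rule sqn_lt_sets, simp)
    then show ?thesis using aUfin by (rule order.strict_trans1)
  qed
  show ?thesis
  proof (rule measure_eqI_generator_eq_countable[where E="range lessThan" and \<Omega>=UNIV and A="range (\<lambda>k::nat. {..<real k})"])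
    show "Int_stable (range (lessThan :: real \<Rightarrow> real set))" by (rule Int_stable_lessThan)
    show "range lessThan \<subseteq> Pow (UNIV :: real set)" by simp
    show "sets (density (distr (density L (indicator E)) borel (sqn S)) (\<lambda>_. aU)) = sigma_sets UNIV (range lessThan)"
      by (simp add: borel_Iio)
    show "sets (density (distr (density L (indicator (space L))) borel (sqn S)) (\<lambda>_. aE)) = sigma_sets UNIV (range lessThan)"
      by (simp add: borel_Iio)
    show "range (\<lambda>k::nat. {..<real k}) \<subseteq> range lessThan" by auto
    show "\<Union> (range (\<lambda>k::nat. {..<real k})) = UNIV"
      by (auto intro: reals_Archimedean2)
    show "countable (range (\<lambda>k::nat. {..<real k}))" by simp
  next
    fix X assume "X \<in> range (lessThan :: real \<Rightarrow> real set)"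
    then obtain t where X: "X = {..<t}" by blast
    have m1: "emeasure (density (distr (density L (indicator E)) borel (sqn S)) (\<lambda>_. aU)) {..<t}
        = aU * emeasure (distr (density L (indicator E)) borel (sqn S)) {..<t}"
      by (rule emeasure_density_const) simp
    have m2: "emeasure (density (distr (density L (indicator (space L))) borel (sqn S)) (\<lambda>_. aE)) {..<t}
        = aE * emeasure (distr (density L (indicator (space L))) borel (sqn S)) {..<t}"
      by (rule emeasure_density_const) simp
    have e1: "emeasure (distr (density L (indicator E)) borel (sqn S)) {..<t} = (if 0 < t then ennreal (sqrt t ^ card S) * aE else 0)"
      using mu_lessThan[OF S E cone, of t] unfolding aE_def L_def .
    have e2: "emeasure (distr (density L (indicator (space L))) borel (sqn S)) {..<t} = (if 0 < t then ennreal (sqrt t ^ card S) * aU else 0)"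
      using mu_lessThan[OF S U[unfolded L_def] coneU[unfolded L_def], of t] unfolding aU_def L_def .
    show "emeasure (density (distr (density L (indicator E)) borel (sqn S)) (\<lambda>_. aU)) X
        = emeasure (density (distr (density L (indicator (space L))) borel (sqn S)) (\<lambda>_. aE)) X"
      unfolding X m1 m2 e1 e2 by (cases "0 < t") (simp_all only: if_True if_False mult_zero_right, metis mult.commute mult.left_commute)
  next
    fix X assume "X \<in> range (\<lambda>k::nat. {..<real k})"
    then obtain t where X: "X = {..<t}" by blast
    have m1: "emeasure (density (distr (density L (indicator E)) borel (sqn S)) (\<lambda>_. aU)) {..<t}
        = aU * emeasure (distr (density L (indicator E)) borel (sqn S)) {..<t}"
      by (rule emeasure_density_const) simp
    have e1: "emeasure (distr (density L (indicator E)) borel (sqn S)) {..<t} = (if 0 < t then ennreal (sqrt t ^ card S) * aE else 0)"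
      using mu_lessThan[OF S E cone, of t] unfolding aE_def L_def .
    have "aU * (if 0 < t then ennreal (sqrt t ^ card S) * aE else 0) < \<infinity>"
      using aUfin aEfin by (auto simp: ennreal_mult_less_top)
    then show "emeasure (density (distr (density L (indicator E)) borel (sqn S)) (\<lambda>_. aU)) X \<noteq> \<infinity>"
      unfolding X m1 e1 by simp
  qed
qed

lemma core:
  assumes S: "finite S" and E: "E \<in> sets (PiM S (\<lambda>_. lborel))"
    and cone: "\<And>y c. y \<in> space (PiM S (\<lambda>_. lborel)) \<Longrightarrow> c > 0 \<Longrightarrow> scl S c y \<in> E \<longleftrightarrow> y \<in> E"
    and D: "D \<in> sets borel"
  shows "emeasure (PiM S (\<lambda>_. NN)) (E \<inter> {y \<in> space (PiM S (\<lambda>_. NN)). sqn S y \<in> D})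
     = emeasure (PiM S (\<lambda>_. NN)) E * emeasure (PiM S (\<lambda>_. NN)) {y \<in> space (PiM S (\<lambda>_. NN)). sqn S y \<in> D}"
proof -
  define L where "L = PiM S (\<lambda>_. lborel :: real measure)"
  define G where "G = PiM S (\<lambda>_. NN)"
  define aE where "aE = emeasure L (E \<inter> {y \<in> space L. sqn S y < 1})"
  define aU where "aU = emeasure L (space L \<inter> {y \<in> space L. sqn S y < 1})"
  define \<Phi> where "\<Phi> E' D' = (\<integral>\<^sup>+ q. ennreal (wq (card S) q) * indicator D' q \<partial>distr (density L (indicator E')) borel (sqn S))" for E' D'
  have spG: "space G = space L" unfolding G_def L_def by (simp add: space_PiM)
  have U: "space L \<in> sets L" by simp
  have Ueq: "space L \<inter> {y \<in> space L. sqn S y < 1} = {y \<in> space L. sqn S y < 1}" by blast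
  have aUfin: "aU < \<infinity>" unfolding aU_def Ueq unfolding L_def by (rule lt1_finite[OF S])
  have aUpos: "aU \<noteq> 0" unfolding aU_def Ueq unfolding L_def by (rule lt1_pos[OF S])
  have meq: "density (distr (density L (indicator E)) borel (sqn S)) (\<lambda>_. aU)
       = density (distr (density L (indicator (space L))) borel (sqn S)) (\<lambda>_. aE)"
    unfolding aU_def aE_def L_def by (rule mu_eq[OF S E cone])
  have key: "aU * \<Phi> E D' = aE * \<Phi> (space L) D'" if D': "D' \<in> sets borel" for D'
  proof -
    have f: "(\<lambda>q. ennreal (wq (card S) q) * indicator D' q) \<in> borel_measurable borel"
      using D' by measurable
    have "aU * \<Phi> E D' = (\<integral>\<^sup>+ q. aU * (ennreal (wq (card S) q) * indicator D' q) \<partial>distr (density L (indicator E)) borel (sqn S))"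
      unfolding \<Phi>_def by (rule nn_integral_cmult[symmetric]) (use f in simp)
    also have "\<dots> = (\<integral>\<^sup>+ q. ennreal (wq (card S) q) * indicator D' q \<partial>density (distr (density L (indicator E)) borel (sqn S)) (\<lambda>_. aU))"
      by (rule nn_integral_density[symmetric]) (use f in simp_all)
    also have "\<dots> = (\<integral>\<^sup>+ q. ennreal (wq (card S) q) * indicator D' q \<partial>density (distr (density L (indicator (space L))) borel (sqn S)) (\<lambda>_. aE))"
      by (simp only: meq)
    also have "\<dots> = (\<integral>\<^sup>+ q. aE * (ennreal (wq (card S) q) * indicator D' q) \<partial>distr (density L (indicator (space L))) borel (sqn S))"
      by (rule nn_integral_density) (use f in simp_all)
    also have "\<dots> = aE * \<Phi> (space L) D'"
      unfolding \<Phi>_def by (rule nn_integral_cmult) (use f in simp)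
    finally show ?thesis .
  qed
  have GE: "emeasure G (E' \<inter> {y \<in> space G. sqn S y \<in> D'}) = \<Phi> E' D'"
    if "E' \<in> sets L" "D' \<in> sets borel" for E' D'
    unfolding G_def \<Phi>_def L_def by (rule gauss_event[OF S]) (use that in \<open>simp_all add: L_def\<close>)
  have Esub: "E \<subseteq> space G" using sets.sets_into_space[OF E] spG unfolding L_def by simp
  have E1: "E \<inter> {y \<in> space G. sqn S y \<in> UNIV} = E" using Esub by blast
  have U1: "space L \<inter> {y \<in> space G. sqn S y \<in> UNIV} = space G" using spG by blast
  have UD: "space L \<inter> {y \<in> space G. sqn S y \<in> D} = {y \<in> space G. sqn S y \<in> D}" using spG by blast
  have probG: "prob_space G" unfolding G_def by (rule prob_space_PiM) (rule prob_NN)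
  have G1: "emeasure G (space G) = 1" using probG by (rule prob_space.emeasure_space_1)
  have EL: "E \<in> sets L" using E unfolding L_def .
  have k1: "aU * emeasure G (E \<inter> {y \<in> space G. sqn S y \<in> D}) = aE * emeasure G {y \<in> space G. sqn S y \<in> D}"
    using key[OF D] GE[OF EL D] GE[OF U D] UD by simp
  have k2: "aU * emeasure G E = aE"
    using key[of UNIV] GE[OF EL, of UNIV] GE[OF U, of UNIV] E1 U1 G1 by simp
  have "aU * emeasure G (E \<inter> {y \<in> space G. sqn S y \<in> D}) = aU * (emeasure G E * emeasure G {y \<in> space G. sqn S y \<in> D})"
    unfolding k1 mult.assoc[symmetric] k2 ..
  then show ?thesis
    using aUfin aUpos unfolding G_def ennreal_mult_cancel_left by auto
qed

lemma sqn_scl_sub: "S2 \<subseteq> S \<Longrightarrow> sqn S2 (scl S c y) = c^2 * sqn S2 y"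
  unfolding sqn_def scl_def by (auto simp: sum_distrib_left power_mult_distrib intro!: sum.cong)

lemma sqn_cong: "(\<And>k. k \<in> S \<Longrightarrow> x k = y k) \<Longrightarrow> sqn S x = sqn S y"
  unfolding sqn_def by (auto intro!: sum.cong)

definition Hq :: "bool \<Rightarrow> bool \<Rightarrow> nat set \<Rightarrow> nat set \<Rightarrow> real \<Rightarrow> (nat \<Rightarrow> real) \<Rightarrow> real" where
  "Hq b1 b2 T1 T2 q x = ((if b2 then 1 else 0) * q + sqn T2 x) / ((if b1 then 1 else 0) * q + sqn T1 x)"

lemma Hq_meas_q: "(\<lambda>q. Hq b1 b2 T1 T2 q x) \<in> borel_measurable borel"
  unfolding Hq_def by measurable

lemma main_indep:
  assumes SI: "S \<subseteq> {..<n}" and S2: "S2 \<subseteq> S"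
    and T1: "T1 \<subseteq> {..<n} - S" and T2: "T2 \<subseteq> {..<n} - S"
  shows "prob_space.indep_var (PiM {..<n} (\<lambda>_. NN))
           borel (\<lambda>g. Hq b1 b2 T1 T2 (sqn S g) g)
           borel (\<lambda>g. sqn S2 g / sqn S g)"
proof -
  define G where "G = PiM {..<n} (\<lambda>_. NN)"
  define GS where "GS = PiM S (\<lambda>_. NN)"
  define T where "T = {..<n} - S"
  define GT where "GT = PiM T (\<lambda>_. NN)"
  define H where "H g = Hq b1 b2 T1 T2 (sqn S g) g" for g
  define F where "F g = sqn S2 g / sqn S g" for g
  define X where "X A B = {g \<in> space G. H g \<in> A \<and> F g \<in> B}" for A B
  define EB where "EB B = {y \<in> space GS. F y \<in> B}" for B
  define Dx where "Dx A x = {q. Hq b1 b2 T1 T2 q x \<in> A}" for A x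
  have finS: "finite S" using SI finite_subset by blast
  have finT: "finite T" unfolding T_def by simp
  have TS: "T \<inter> S = {}" "T \<union> S = {..<n}" using SI unfolding T_def by auto
  have probG: "prob_space G" unfolding G_def by (rule prob_space_PiM) (rule prob_NN)
  have probGS: "prob_space GS" unfolding GS_def by (rule prob_space_PiM) (rule prob_NN)
  have probGT: "prob_space GT" unfolding GT_def by (rule prob_space_PiM) (rule prob_NN)
  have Fmeas: "F \<in> borel_measurable (PiM I (\<lambda>_. NN))" if "S \<subseteq> I" for I
    unfolding F_def using that S2 by (intro borel_measurable_divide sqn_meas_N) auto
  have FmeasL: "F \<in> borel_measurable (PiM S (\<lambda>_. lborel))"
    unfolding F_def using S2 by (intro borel_measurable_divide sqn_meas_L) auto
  have Hmeas: "H \<in> borel_measurable G"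
    unfolding H_def Hq_def G_def using SI T1 T2
    by (intro borel_measurable_divide borel_measurable_add borel_measurable_times borel_measurable_const sqn_meas_N) auto
  have Xsets: "X A B \<in> sets G" if "A \<in> sets borel" "B \<in> sets borel" for A B
  proof -
    have "X A B = (H -` A \<inter> space G) \<inter> (F -` B \<inter> space G)" unfolding X_def by blast
    also have "\<dots> \<in> sets G"
      using that Hmeas Fmeas[OF SI] unfolding G_def by (intro sets.Int measurable_sets) auto
    finally show ?thesis .
  qed
  have EBsets: "EB B \<in> sets (PiM S (\<lambda>_. lborel))" if "B \<in> sets borel" for B
  proof -
    have sp: "space GS = space (PiM S (\<lambda>_. lborel :: real measure))" unfolding GS_def by (simp add: space_PiM)
    have "EB B = F -` B \<inter> space (PiM S (\<lambda>_. lborel))" unfolding EB_def sp by blast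
    also have "\<dots> \<in> sets (PiM S (\<lambda>_. lborel))"
      using that FmeasL by (intro measurable_sets) auto
    finally show ?thesis .
  qed
  have EBcone: "scl S c y \<in> EB B \<longleftrightarrow> y \<in> EB B" if "y \<in> space (PiM S (\<lambda>_. lborel))" "c > 0" for y c B
  proof -
    have sp: "space GS = space (PiM S (\<lambda>_. lborel :: real measure))" unfolding GS_def by (simp add: space_PiM)
    have "scl S c y \<in> space GS" using measurable_space[OF scl_meas that(1)] unfolding sp .
    moreover have "F (scl S c y) = F y"
      unfolding F_def using sqn_scl_sub[OF S2] sqn_scl_sub[of S S] that(2) by simp
    ultimately show ?thesis using that(1) unfolding EB_def sp by auto
  qed
  have Dxsets: "Dx A x \<in> sets borel" if "A \<in> sets borel" for A x
  proof -
    have "Dx A x = (\<lambda>q. Hq b1 b2 T1 T2 q x) -` A \<inter> space borel" unfolding Dx_def by auto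
    also have "\<dots> \<in> sets borel" using that by (intro measurable_sets[OF Hq_meas_q])
    finally show ?thesis .
  qed
  have pre: "(\<lambda>y. merge T S (x, y)) -` X A B \<inter> space GS = EB B \<inter> {y \<in> space GS. sqn S y \<in> Dx A x}"
    if x: "x \<in> space GT" for x A B
  proof -
    have "merge T S (x, y) \<in> space G \<and> H (merge T S (x, y)) = Hq b1 b2 T1 T2 (sqn S y) x \<and> F (merge T S (x, y)) = F y"
      if y: "y \<in> space GS" for y
    proof (intro conjI)
      show "merge T S (x, y) \<in> space G"
        using x y TS unfolding G_def GS_def GT_def by (auto simp: space_PiM merge_def PiE_def extensional_def)
      have m1: "sqn S (merge T S (x, y)) = sqn S y"
        using TS by (intro sqn_cong) (auto simp: merge_def)
      have m2: "sqn S2 (merge T S (x, y)) = sqn S2 y"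
        using TS S2 by (intro sqn_cong) (auto simp: merge_def)
      have m3: "sqn T1 (merge T S (x, y)) = sqn T1 x" "sqn T2 (merge T S (x, y)) = sqn T2 x"
        using T1 T2 unfolding T_def by (auto intro!: sqn_cong simp: merge_def)
      show "H (merge T S (x, y)) = Hq b1 b2 T1 T2 (sqn S y) x"
        unfolding H_def Hq_def m1 m3 ..
      show "F (merge T S (x, y)) = F y" unfolding F_def m1 m2 ..
    qed
    then show ?thesis unfolding X_def EB_def Dx_def by auto
  qed
  have spGS: "space GS = space (PiM S (\<lambda>_. lborel :: real measure))" unfolding GS_def by (simp add: space_PiM)
  have EBU: "EB UNIV = space GS" unfolding EB_def by simp
  have coreX: "emeasure GS ((\<lambda>y. merge T S (x, y)) -` X A B \<inter> space GS)
      = emeasure GS (EB B) * emeasure GS ((\<lambda>y. merge T S (x, y)) -` X A UNIV \<inter> space GS)"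
    if x: "x \<in> space GT" and A: "A \<in> sets borel" and B: "B \<in> sets borel" for x A B
  proof -
    have c: "emeasure GS (EB B \<inter> {y \<in> space GS. sqn S y \<in> Dx A x}) = emeasure GS (EB B) * emeasure GS {y \<in> space GS. sqn S y \<in> Dx A x}"
      unfolding GS_def by (rule core[OF finS EBsets[OF B] EBcone Dxsets[OF A]])
    have "EB UNIV \<inter> {y \<in> space GS. sqn S y \<in> Dx A x} = {y \<in> space GS. sqn S y \<in> Dx A x}"
      unfolding EBU by blast
    then show ?thesis unfolding pre[OF x] c by simp
  qed
  have fold: "emeasure G (X A B) = (\<integral>\<^sup>+ x. emeasure GS ((\<lambda>y. merge T S (x, y)) -` X A B \<inter> space GS) \<partial>GT)"
    if A: "A \<in> sets borel" and B: "B \<in> sets borel" for A B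
    using GN.emeasure_fold_integral[OF TS(1) finT finS, of "X A B"] Xsets[OF A B]
    unfolding G_def GS_def GT_def TS(2) by simp
  have foldm: "(\<lambda>x. emeasure GS ((\<lambda>y. merge T S (x, y)) -` X A B \<inter> space GS)) \<in> borel_measurable GT"
    if A: "A \<in> sets borel" and B: "B \<in> sets borel" for A B
    using GN.emeasure_fold_measurable[OF TS(1) finT finS, of "X A B"] Xsets[OF A B]
    unfolding G_def GS_def GT_def TS(2) by simp
  have UB: "UNIV \<in> sets (borel :: real measure)" by simp
  have XAB: "emeasure G (X A B) = emeasure GS (EB B) * emeasure G (X A UNIV)"
    if A: "A \<in> sets borel" and B: "B \<in> sets borel" for A B
  proof -
    have "emeasure G (X A B) = (\<integral>\<^sup>+ x. emeasure GS (EB B) * emeasure GS ((\<lambda>y. merge T S (x, y)) -` X A UNIV \<inter> space GS) \<partial>GT)"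
      unfolding fold[OF A B] by (intro nn_integral_cong coreX A B)
    also have "\<dots> = emeasure GS (EB B) * (\<integral>\<^sup>+ x. emeasure GS ((\<lambda>y. merge T S (x, y)) -` X A UNIV \<inter> space GS) \<partial>GT)"
      by (rule nn_integral_cmult[OF foldm[OF A]]) simp
    also have "\<dots> = emeasure GS (EB B) * emeasure G (X A UNIV)"
      unfolding fold[OF A UB] ..
    finally show ?thesis .
  qed
  have XUU: "X UNIV UNIV = space G" unfolding X_def by simp
  have G1: "emeasure G (space G) = 1" using probG by (rule prob_space.emeasure_space_1)
  have prodX: "emeasure G (X A B) = emeasure G (X A UNIV) * emeasure G (X UNIV B)"
    if A: "A \<in> sets borel" and B: "B \<in> sets borel" for A B
    using XAB[OF A B] XAB[OF UB B] by (simp add: XUU G1 mult.commute)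
  interpret PG: prob_space G by (rule probG)
  have rvH: "H \<in> measurable G borel" using Hmeas by simp
  have rvF: "F \<in> measurable G borel" using Fmeas[OF SI] unfolding G_def .
  have "PG.indep_var borel H borel F"
    unfolding PG.indep_var_distribution_eq
  proof (intro conjI rvH rvF pair_measure_eqI)
    show "sigma_finite_measure (distr G borel H)"
      by (intro prob_space_imp_sigma_finite PG.prob_space_distr rvH)
    show "sigma_finite_measure (distr G borel F)"
      by (intro prob_space_imp_sigma_finite PG.prob_space_distr rvF)
    show "sets (distr G borel H \<Otimes>\<^sub>M distr G borel F) = sets (distr G (borel \<Otimes>\<^sub>M borel) (\<lambda>x. (H x, F x)))"
      by (simp cong: sets_pair_measure_cong)
    fix A B assume A: "A \<in> sets (distr G borel H)" and B: "B \<in> sets (distr G borel F)"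
    then have A': "A \<in> sets borel" and B': "B \<in> sets borel" by auto
    have e1: "emeasure (distr G borel H) A = emeasure G (X A UNIV)"
      using A' by (subst emeasure_distr[OF rvH]) (auto simp: X_def intro!: arg_cong[where f="emeasure G"])
    have e2: "emeasure (distr G borel F) B = emeasure G (X UNIV B)"
      using B' by (subst emeasure_distr[OF rvF]) (auto simp: X_def intro!: arg_cong[where f="emeasure G"])
    have rvP: "(\<lambda>x. (H x, F x)) \<in> measurable G (borel \<Otimes>\<^sub>M borel)"
      using rvH rvF by (rule measurable_Pair)
    have e3: "emeasure (distr G (borel \<Otimes>\<^sub>M borel) (\<lambda>x. (H x, F x))) (A \<times> B) = emeasure G (X A B)"
      using A' B' by (subst emeasure_distr[OF rvP]) (auto simp: X_def intro!: arg_cong[where f="emeasure G"])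
    show "emeasure (distr G borel H) A * emeasure (distr G borel F) B = emeasure (distr G (borel \<Otimes>\<^sub>M borel) (\<lambda>x. (H x, F x))) (A \<times> B)"
      unfolding e1 e2 e3 prodX[OF A' B'] ..
  qed
  then show ?thesis unfolding G_def H_def F_def .
qed

lemma (in prob_space) indep_var_swap:
  assumes "indep_var S X T Y" shows "indep_var T Y S X"
proof -
  let ?A = "sigma_sets (space M) {X -` A \<inter> space M | A. A \<in> sets S}"
  let ?B = "sigma_sets (space M) {Y -` A \<inter> space M | A. A \<in> sets T}"
  have r: "random_variable S X" "random_variable T Y" and e: "?A \<subseteq> events" "?B \<subseteq> events"
    and h: "\<forall>a\<in>?A. \<forall>b\<in>?B. prob (a \<inter> b) = prob a * prob b"
    using assms unfolding indep_var_eq indep_sets2_eq by auto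
  have "\<forall>b\<in>?B. \<forall>a\<in>?A. prob (b \<inter> a) = prob b * prob a"
  proof (intro ballI)
    fix a b assume "b \<in> ?B" "a \<in> ?A"
    then have "prob (a \<inter> b) = prob a * prob b" using h by blast
    then show "prob (b \<inter> a) = prob b * prob a" by (simp add: Int_commute mult.commute)
  qed
  then show ?thesis unfolding indep_var_eq indep_sets2_eq using r e by blast
qed

definition Cn :: "nat \<Rightarrow> nat \<Rightarrow> nat set" where
  "Cn n j = {k. k < n \<and> (\<exists>m. (k + n) div 2^m = j)}"

definition desc :: "nat \<Rightarrow> nat \<Rightarrow> bool" where
  "desc a b \<longleftrightarrow> (\<exists>p. a div 2^p = b)"

lemma Cn_sub: "Cn n j \<subseteq> {..<n}" unfolding Cn_def by auto

lemma loader_r_sqn: "loader_r n x j = sqn (Cn n j) x"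
proof -
  have eq: "subtree_leaves n j = (\<lambda>k. k + n) ` Cn n j"
  proof
    show "subtree_leaves n j \<subseteq> (\<lambda>k. k + n) ` Cn n j"
    proof
      fix l assume "l \<in> subtree_leaves n j"
      then have l: "n \<le> l" "l < 2 * n" "\<exists>m. l div 2^m = j" unfolding subtree_leaves_def by auto
      then have "l - n \<in> Cn n j" unfolding Cn_def by auto
      moreover have "l = (l - n) + n" using l by simp
      ultimately show "l \<in> (\<lambda>k. k + n) ` Cn n j" by blast
    qed
    show "(\<lambda>k. k + n) ` Cn n j \<subseteq> subtree_leaves n j"
      unfolding Cn_def subtree_leaves_def by auto
  qed
  have "loader_r n x j = (\<Sum>l\<in>(\<lambda>k. k + n) ` Cn n j. (x (l - n))^2)"
    unfolding loader_r_def eq ..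
  also have "\<dots> = (\<Sum>k\<in>Cn n j. (x k)^2)"
    by (subst sum.reindex) (auto simp: inj_on_def)
  finally show ?thesis unfolding sqn_def .
qed

lemma theta_eq:
  "loader_theta n (unit_normalize n g) j = arccos (sqrt (sqn (Cn n (2*j)) g / sqn (Cn n j) g))"
proof -
  define c where "c = (\<Sum>l<n. (g l)^2)"
  have c0: "c \<ge> 0" unfolding c_def by (simp add: sum_nonneg)
  have sq: "sqn C (unit_normalize n g) = sqn C g / c" for C
    unfolding sqn_def unit_normalize_def c_def
    by (simp add: power_divide sum_divide_distrib[symmetric] sum_nonneg)
  have rat: "sqn (Cn n (2*j)) g / c / (sqn (Cn n j) g / c) = sqn (Cn n (2*j)) g / sqn (Cn n j) g"
  proof (cases "c = 0")
    case True
    then have "\<forall>l\<in>{..<n}. (g l)^2 = 0" unfolding c_def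
      by (subst sum_nonneg_eq_0_iff[symmetric]) auto
    then have "sqn (Cn n (2*j)) g = 0" unfolding sqn_def using Cn_sub by (intro sum.neutral) auto
    then show ?thesis using True by simp
  next
    case False
    then show ?thesis by simp
  qed
  show ?thesis unfolding loader_theta_def loader_r_sqn sq rat ..
qed

lemma desc_trans: "desc a b \<Longrightarrow> desc b c \<Longrightarrow> desc a c"
  unfolding desc_def by (metis div_mult2_eq power_add)

lemma Cn_desc: "desc a b \<Longrightarrow> Cn n a \<subseteq> Cn n b"
  unfolding Cn_def desc_def by (auto, metis div_mult2_eq power_add)

lemma desc_double: "desc (2*j) j"
  unfolding desc_def by (rule exI[of _ 1]) simp

lemma dichotomy:
  assumes nd: "\<not> desc i j" and ij: "i \<noteq> j" and A: "A = i \<or> A = 2 * i"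
  shows "Cn n A \<inter> Cn n j = {} \<or> Cn n j \<subseteq> Cn n A"
proof (rule ccontr)
  assume "\<not> ?thesis"
  then obtain k where k1: "k \<in> Cn n A" and k2: "k \<in> Cn n j" and ns: "\<not> Cn n j \<subseteq> Cn n A" by blast
  obtain p where p: "(k + n) div 2^p = A" using k1 unfolding Cn_def by auto
  obtain q where q: "(k + n) div 2^q = j" using k2 unfolding Cn_def by auto
  show False
  proof (cases "p \<le> q")
    case True
    have jA: "j = A div 2^(q - p)"
      using p q True by (metis div_mult2_eq le_add_diff_inverse power_add)
    show ?thesis
    proof (cases "A = i")
      case True
      then show ?thesis using jA nd unfolding desc_def by auto
    next
      case False
      then have A2: "A = 2 * i" using A by auto
      show ?thesis
      proof (cases "q = p")
        case True
        then have "j = A" using jA by simp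
        then show ?thesis using ns by simp
      next
        case False
        then obtain d where d: "q - p = Suc d" using \<open>p \<le> q\<close> by (metis Suc_diff_Suc le_neq_implies_less)
        have "j = i div 2^d" using jA A2 d by (simp add: div_mult2_eq)
        then show ?thesis using nd unfolding desc_def by auto
      qed
    qed
  next
    case False
    have "A = j div 2^(p - q)"
      using p q False by (metis div_mult2_eq le_add_diff_inverse nat_le_linear power_add)
    then have "desc j A" unfolding desc_def by auto
    then show ?thesis using ns Cn_desc by blast
  qed
qed

lemma not_both_desc:
  assumes "1 \<le> i" "i \<noteq> j" shows "\<not> desc i j \<or> \<not> desc j i"
proof (rule ccontr)
  assume "\<not> ?thesis"
  then obtain p q where p: "i div 2^p = j" and q: "j div 2^q = i" unfolding desc_def by auto
  then have iq: "i div 2^(p+q) = i" by (metis div_mult2_eq power_add)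
  have "p + q > 0" using p assms(2) by (cases "p + q") auto
  then have "(2::nat)^(p+q) > 1" using one_less_power[of "2::nat" "p+q"] by simp
  then have "i div 2^(p+q) < i" using assms(1) by (intro div_less_dividend) auto
  then show False using iq by simp
qed

definition Th :: "real \<Rightarrow> real" where
  "Th t = arccos (sqrt (max 0 (min 1 t)))"

lemma Th_meas: "Th \<in> borel_measurable borel"
  unfolding Th_def
  by (intro borel_measurable_continuous_onI continuous_on_arccos continuous_intros) (auto simp: max_def min_def intro: order.trans[OF _ real_sqrt_ge_zero])

lemma ratio_range: "0 \<le> a \<Longrightarrow> a \<le> b \<Longrightarrow> arccos (sqrt (a / b)) = Th (a / b)"
  unfolding Th_def by (cases "b = 0") (auto simp: min_def max_def divide_le_eq_1)

lemma sqn_mono: "A \<subseteq> B \<Longrightarrow> finite B \<Longrightarrow> sqn A x \<le> sqn B x"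
  unfolding sqn_def by (intro sum_mono2) auto

lemma theta_Th: "loader_theta n (unit_normalize n g) j = Th (sqn (Cn n (2*j)) g / sqn (Cn n j) g)"
  unfolding theta_eq
  by (intro ratio_range sqn_nonneg sqn_mono Cn_desc desc_double) (rule finite_subset[OF Cn_sub], simp)

lemma split_sqn:
  assumes "Cn n A \<inter> S = {} \<or> S \<subseteq> Cn n A"
  shows "sqn (Cn n A) g = (if S \<subseteq> Cn n A then 1 else 0) * sqn S g + sqn (Cn n A - S) g"
proof (cases "S \<subseteq> Cn n A")
  case True
  have fin: "finite (Cn n A)" by (rule finite_subset[OF Cn_sub]) simp
  show ?thesis using True unfolding sqn_def by (simp add: sum.subset_diff[OF True fin])
next
  case False
  then have "Cn n A - S = Cn n A" using assms by blast
  then show ?thesis using False by simp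
qed

lemma indep_case:
  assumes nd: "\<not> desc i j" and ij: "i \<noteq> j"
  shows "prob_space.indep_var (gaussian_vec n)
           borel (\<lambda>g. loader_theta n (unit_normalize n g) i)
           borel (\<lambda>g. loader_theta n (unit_normalize n g) j)"
proof -
  define S where "S = Cn n j"
  define S2 where "S2 = Cn n (2*j)"
  define b1 where "b1 = (S \<subseteq> Cn n i)"
  define b2 where "b2 = (S \<subseteq> Cn n (2*i))"
  define T1 where "T1 = Cn n i - S"
  define T2 where "T2 = Cn n (2*i) - S"
  have SI: "S \<subseteq> {..<n}" unfolding S_def by (rule Cn_sub)
  have S2S: "S2 \<subseteq> S" unfolding S2_def S_def by (intro Cn_desc desc_double)
  have T1s: "T1 \<subseteq> {..<n} - S" unfolding T1_def using Cn_sub by blast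
  have T2s: "T2 \<subseteq> {..<n} - S" unfolding T2_def using Cn_sub by blast
  have d1: "Cn n i \<inter> S = {} \<or> S \<subseteq> Cn n i" unfolding S_def using dichotomy[OF nd ij, of i] by blast
  have d2: "Cn n (2*i) \<inter> S = {} \<or> S \<subseteq> Cn n (2*i)" unfolding S_def using dichotomy[OF nd ij, of "2*i"] by blast
  have ri: "sqn (Cn n (2*i)) g / sqn (Cn n i) g = Hq b1 b2 T1 T2 (sqn S g) g" for g
    unfolding Hq_def b1_def b2_def T1_def T2_def split_sqn[OF d1, of g] split_sqn[OF d2, of g] ..
  have probG: "prob_space (gaussian_vec n)" unfolding gaussian_vec_def by (rule prob_space_PiM) (rule prob_NN)
  have ind: "prob_space.indep_var (gaussian_vec n) borel (\<lambda>g. Hq b1 b2 T1 T2 (sqn S g) g) borel (\<lambda>g. sqn S2 g / sqn S g)"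
    unfolding gaussian_vec_def by (rule main_indep[OF SI S2S T1s T2s])
  have "prob_space.indep_var (gaussian_vec n) borel (Th \<circ> (\<lambda>g. Hq b1 b2 T1 T2 (sqn S g) g)) borel (Th \<circ> (\<lambda>g. sqn S2 g / sqn S g))"
    by (rule prob_space.indep_var_compose[OF probG ind Th_meas Th_meas])
  moreover have "Th \<circ> (\<lambda>g. Hq b1 b2 T1 T2 (sqn S g) g) = (\<lambda>g. loader_theta n (unit_normalize n g) i)"
    by (rule ext) (simp add: theta_Th ri)
  moreover have "Th \<circ> (\<lambda>g. sqn S2 g / sqn S g) = (\<lambda>g. loader_theta n (unit_normalize n g) j)"
    by (rule ext) (simp add: theta_Th S_def S2_def)
  ultimately show ?thesis by simp
qed

theorem lemma3:
  fixes n i j :: nat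
  assumes "\<exists>k. n = 2^k"
    and "1 \<le> i" and "i < n" and "1 \<le> j" and "j < n" and "i \<noteq> j"
  shows "prob_space.indep_var (gaussian_vec n)
           borel (\<lambda>g. loader_theta n (unit_normalize n g) i)
           borel (\<lambda>g. loader_theta n (unit_normalize n g) j)"
proof -
  have probG: "prob_space (gaussian_vec n)" unfolding gaussian_vec_def by (rule prob_space_PiM) (rule prob_NN)
  show ?thesis
  proof (cases "desc i j")
    case False
    then show ?thesis using indep_case assms(6) by blast
  next
    case True
    then have "\<not> desc j i" using not_both_desc[OF assms(2) assms(6)] by blast
    then have "prob_space.indep_var (gaussian_vec n)
           borel (\<lambda>g. loader_theta n (unit_normalize n g) j)
           borel (\<lambda>g. loader_theta n (unit_normalize n g) i)"
      using indep_case assms(6) by metis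
    then show ?thesis by (rule prob_space.indep_var_swap[OF probG])
  qed
qed

end
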